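(* For every fixed $m\ge 2$, \[s\text{-}sat(Q_n,Q_m)\ge\Big(\frac{m+1}{2}-o(1)\Big)2^n\quad\text{as } n\to\infty.\]
   Context: $Q_n$ is the hypercube on $\{0,1\}^n$ with edges between vertices differing in exactly one coordinate. A copy of $F$ is a subgraph isomorphic to $F$. A graph $G$ is $(Q_n,F)$-semi-saturated if $G\subseteq Q_n$ and adding any edge of $E(Q_n)\setminus E(G)$ increases the number of copies of $F$. $s\text{-}sat(Q_n,F)$ is the minimum number of edges of a $(Q_n,F)$-semi-saturated graph. *)

theory Defs
  imports Complex_Main
begin

text \<open>Vertices of the hypercube Q_n: subsets of {0..<n} (i.e. 0/1 vectors of length n).
  Edges: unordered pairs of vertices whose symmetric difference has exactly one element.\<close>

definition QV :: "nat \<Rightarrow> nat set set" where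
  "QV n = {x. x \<subseteq> {..<n}}"

definition QE :: "nat \<Rightarrow> nat set set set" where
  "QE n = {{x, y} | x y. x \<in> QV n \<and> y \<in> QV n \<and> card ((x - y) \<union> (y - x)) = 1}"

text \<open>Since Q_m (m \<ge> 1) has no isolated
  vertices, a copy is determined by its edge set.\<close>

definition is_copy :: "nat \<Rightarrow> nat \<Rightarrow> nat set set set \<Rightarrow> bool" where
  "is_copy n m H \<longleftrightarrow> (\<exists>f. f ` QV m \<subseteq> QV n \<and> inj_on f (QV m) \<and>
       H = (\<lambda>e. f ` e) ` QE m)"

definition num_copies :: "nat \<Rightarrow> nat \<Rightarrow> nat set set set \<Rightarrow> nat" where
  "num_copies n m E = card {H. H \<subseteq> E \<and> is_copy n m H}"

definition semi_saturated :: "nat \<Rightarrow> nat \<Rightarrow> nat set set set \<Rightarrow> bool" where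
  "semi_saturated n m E \<longleftrightarrow> E \<subseteq> QE n \<and>
     (\<forall>e \<in> QE n - E. num_copies n m (insert e E) > num_copies n m E)"

definition s_sat :: "nat \<Rightarrow> nat \<Rightarrow> nat" where
  "s_sat n m = (LEAST k. \<exists>E. semi_saturated n m E \<and> card E = k)"

end

theory Submission imports Defs begin

definition flip :: "nat set \<Rightarrow> nat \<Rightarrow> nat set" where
  "flip x i = (if i \<in> x then x - {i} else insert i x)"

lemma mem_flip: "z \<in> flip x i \<longleftrightarrow> (z \<in> x) \<noteq> (z = i)"
  by (auto simp: flip_def)

lemma flip_flip[simp]: "flip (flip x i) i = x"
  by (auto simp: set_eq_iff mem_flip)

lemma flip_comm: "flip (flip x i) j = flip (flip x j) i"
  by (auto simp: set_eq_iff mem_flip)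

lemma flip_neq[simp]: "flip x i \<noteq> x" "x \<noteq> flip x i"
  by (auto simp: set_eq_iff mem_flip)

lemma flip_inj[simp]: "flip x i = flip x j \<longleftrightarrow> i = j"
  by (auto simp: set_eq_iff mem_flip)

lemma flip_inj2[simp]: "flip x i = flip y i \<longleftrightarrow> x = y"
  by (metis flip_flip)

lemma flip_QV: "x \<in> QV n \<Longrightarrow> i < n \<Longrightarrow> flip x i \<in> QV n"
  by (auto simp: QV_def flip_def)

lemma finite_QV: "finite (QV n)"
  unfolding QV_def by simp

lemma card_QV: "card (QV n) = 2 ^ n"
proof -
  have "QV n = Pow {..<n}" by (auto simp: QV_def)
  thus ?thesis by (simp add: card_Pow)
qed


lemma sd_flip: "(x - y) \<union> (y - x) = {i} \<longleftrightarrow> y = flip x i"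
proof
  assume h: "(x - y) \<union> (y - x) = {i}"
  show "y = flip x i"
  proof (rule set_eqI)
    fix z show "z \<in> y \<longleftrightarrow> z \<in> flip x i"
      using h unfolding mem_flip by (cases "z = i") blast+
  qed
next
  assume "y = flip x i" thus "(x - y) \<union> (y - x) = {i}"
    by (auto simp: mem_flip)
qed
lemma adj_iff: "card ((x - y) \<union> (y - x)) = 1 \<longleftrightarrow> (\<exists>i. y = flip x i)"
  by (simp add: card_1_singleton_iff sd_flip)

lemma flip_in_QV_lt: "x \<in> QV n \<Longrightarrow> flip x i \<in> QV n \<Longrightarrow> i < n"
proof -
  assume "x \<in> QV n" "flip x i \<in> QV n"
  moreover have "i \<in> x \<or> i \<in> flip x i" by (simp add: mem_flip)
  ultimately show ?thesis unfolding QV_def by blast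
qed

lemma QE_memI: "x \<in> QV n \<Longrightarrow> i < n \<Longrightarrow> {x, flip x i} \<in> QE n"
proof -
  assume h: "x \<in> QV n" "i < n"
  have c: "card ((x - flip x i) \<union> (flip x i - x)) = 1" by (simp only: adj_iff) blast
  show ?thesis unfolding QE_def mem_Collect_eq
    apply (rule exI[of _ x], rule exI[of _ "flip x i"])
    using h c flip_QV by simp
qed

lemma QE_elim: "e \<in> QE n \<Longrightarrow> \<exists>x i. x \<in> QV n \<and> i < n \<and> e = {x, flip x i}"
proof -
  assume "e \<in> QE n"
  then obtain x y where h: "e = {x, y}" "x \<in> QV n" "y \<in> QV n" "card ((x - y) \<union> (y - x)) = 1"
    unfolding QE_def mem_Collect_eq by (elim exE conjE) (rule that, assumption+)
  then obtain i where i: "y = flip x i" using adj_iff by blast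
  have "i < n" using h i flip_in_QV_lt by blast
  moreover have "e = {x, flip x i}" using h(1) i by (simp only:)
  ultimately show ?thesis using h(2) by blast
qed

lemma QE_pair: "{x, y} \<in> QE n \<Longrightarrow> x \<in> QV n \<and> (\<exists>i<n. y = flip x i)"
proof -
  assume "{x, y} \<in> QE n"
  from QE_elim[OF this] obtain z i where z: "z \<in> QV n" "i < n" "{x,y} = {z, flip z i}" by (elim exE conjE)
  from z(3) have "(x = z \<and> y = flip z i) \<or> (x = flip z i \<and> y = z)" by (rule doubleton_eq_iff[THEN iffD1])
  thus ?thesis
  proof
    assume h: "x = z \<and> y = flip z i"
    then have "x \<in> QV n" "y = flip x i" using z(1) by simp_all
    thus ?thesis using z(2) by blast
  next
    assume h: "x = flip z i \<and> y = z"
    then have "y = flip x i" by simp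
    moreover have "x \<in> QV n" using h z flip_QV by simp
    ultimately show ?thesis using z(2) by blast
  qed
qed
lemma pair_eq1: "{v, y} = {v, w} \<longleftrightarrow> y = w"
  unfolding doubleton_eq_iff by blast

lemma common_nbr:
  assumes "flip (flip v a) i = flip (flip v b) j" "a \<noteq> b" "flip (flip v a) i \<noteq> v"
  shows "flip (flip v a) i = flip (flip v a) b"
proof -
  have e: "\<And>z. ((z \<in> v) \<noteq> (z = a)) \<noteq> (z = i) \<longleftrightarrow> ((z \<in> v) \<noteq> (z = b)) \<noteq> (z = j)"
    using assms(1) by (auto simp: set_eq_iff mem_flip)
  have "i \<noteq> a" using assms(3) by auto
  then have "a = j" using e[of a] assms(2) by auto
  then have "i = b" using e[of i] assms(2) \<open>i \<noteq> a\<close> by auto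
  thus ?thesis by simp
qed



definition dirs :: "nat set set set \<Rightarrow> nat \<Rightarrow> nat set \<Rightarrow> nat set" where
  "dirs E n v = {a. a < n \<and> {v, flip v a} \<in> E}"

abbreviation deg where "deg E n v \<equiv> card (dirs E n v)"

lemma dirs_sub: "dirs E n v \<subseteq> {..<n}" by (auto simp: dirs_def)
lemma finite_dirs[simp]: "finite (dirs E n v)" by (rule finite_subset[OF dirs_sub]) simp
lemma deg_le: "deg E n v \<le> n" using card_mono[OF finite_lessThan dirs_sub] by simp

lemma copy_exists:
  assumes "semi_saturated n m E" "e \<in> QE n" "e \<notin> E"
  shows "\<exists>H. H \<subseteq> insert e E \<and> is_copy n m H \<and> e \<in> H"
proof -
  have "num_copies n m (insert e E) > num_copies n m E"
    using assms unfolding semi_saturated_def by blast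
  then have "{H. H \<subseteq> insert e E \<and> is_copy n m H} \<noteq> {H. H \<subseteq> E \<and> is_copy n m H}"
    unfolding num_copies_def by auto
  then obtain H where "H \<subseteq> insert e E" "is_copy n m H" "\<not> H \<subseteq> E"
    by blast
  thus ?thesis by blast
qed

lemma four_cycle:
  assumes ss: "semi_saturated n m E" and v: "v \<in> QV n" and b: "b < n" "b \<notin> dirs E n v"
  shows "\<exists>S \<subseteq> dirs E n v. card S = m - 1 \<and> b \<notin> S \<and>
           (\<forall>a\<in>S. {flip v a, flip (flip v a) b} \<in> E \<and> {flip v b, flip (flip v a) b} \<in> E)"
proof -
  define e where "e = {v, flip v b}"
  have EQ: "E \<subseteq> QE n" using ss unfolding semi_saturated_def by (elim conjE)
  have eQ: "e \<in> QE n" unfolding e_def by (rule QE_memI[OF v b(1)])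
  have eE: "e \<notin> E" using b unfolding e_def by (simp add: dirs_def)
  obtain H where H: "H \<subseteq> insert e E" "is_copy n m H" "e \<in> H"
    using copy_exists[OF ss eQ eE] by (elim exE conjE)
  obtain f where f: "f ` QV m \<subseteq> QV n" "inj_on f (QV m)" "H = (\<lambda>e. f ` e) ` QE m"
    using H(2) unfolding is_copy_def by (elim exE conjE)
  have HQ: "H \<subseteq> QE n" using H(1) EQ eQ by blast
  have "e \<in> (\<lambda>e. f ` e) ` QE m" using H(3) f(3) by simp
  then obtain e0 where e0: "e0 \<in> QE m" "e = f ` e0" by (rule imageE)
  from QE_elim[OF e0(1)] obtain p c where pc: "p \<in> QV m" "c < m" "e0 = {p, flip p c}"
    by (elim exE conjE)
  have "{f p, f (flip p c)} = {v, flip v b}" using e0(2) pc(3) e_def by simp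
  then have disj: "(f p = v \<and> f (flip p c) = flip v b) \<or> (f p = flip v b \<and> f (flip p c) = v)"
    by (rule doubleton_eq_iff[THEN iffD1])
  obtain p' where p': "p' \<in> QV m" "f p' = v" "f (flip p' c) = flip v b"
    using disj
  proof
    assume h: "f p = v \<and> f (flip p c) = flip v b"
    show ?thesis by (rule that[of p]) (use pc(1) h in simp_all)
  next
    assume h: "f p = flip v b \<and> f (flip p c) = v"
    have "flip p c \<in> QV m" using flip_QV pc by simp
    moreover have "f (flip (flip p c) c) = flip v b" using h by simp
    ultimately show ?thesis using h by (intro that[of "flip p c"]) simp_all
  qed
  have edgeH: "{f x, f (flip x j)} \<in> H" if "x \<in> QV m" "j < m" for x j
  proof -
    have "{x, flip x j} \<in> QE m" using QE_memI that by simp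
    then have "f ` {x, flip x j} \<in> H" unfolding f(3) by (rule imageI)
    thus ?thesis by simp
  qed
  have nb: "\<exists>a<n. f (flip p' j) = flip v a" if "j < m" for j
  proof -
    have "{f p', f (flip p' j)} \<in> QE n" using edgeH[OF p'(1) that] HQ by (rule subsetD[rotated])
    then have "{v, f (flip p' j)} \<in> QE n" using p'(2) by simp
    from QE_pair[OF this] show ?thesis by (elim conjE)
  qed
  define g where "g j = (SOME a. a < n \<and> f (flip p' j) = flip v a)" for j
  have g: "g j < n \<and> f (flip p' j) = flip v (g j)" if "j < m" for j
    using someI_ex[OF nb[OF that]] unfolding g_def by simp
  have gc: "g c = b" using g[OF pc(2)] p'(3) by simp
  have fl: "flip p' j \<in> QV m" if "j < m" for j using flip_QV[OF p'(1) that] .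
  have ginj: "inj_on g {..<m}"
  proof (rule inj_onI)
    fix j k assume jk: "j \<in> {..<m}" "k \<in> {..<m}" "g j = g k"
    then have "f (flip p' j) = f (flip p' k)" using g[of j] g[of k] by simp
    then have "flip p' j = flip p' k" using inj_onD[OF f(2) _ fl fl] jk(1,2) by simp
    thus "j = k" by simp
  qed
  define S where "S = g ` ({..<m} - {c})"
  have cardS: "card S = m - 1" unfolding S_def
    using card_image[OF inj_on_subset[OF ginj]] pc(2) by (simp add: card_Diff_singleton)
  have bS: "b \<notin> S"
  proof
    assume "b \<in> S"
    then obtain j where j: "j \<in> {..<m}" "j \<noteq> c" "b = g j" unfolding S_def by blast
    then have "g j = g c" using gc by simp
    then show False using inj_onD[OF ginj _ j(1)] pc(2) j(2) by simp
  qed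
  have Sd: "S \<subseteq> dirs E n v"
  proof
    fix a assume aS: "a \<in> S"
    then obtain j where j: "j < m" "j \<noteq> c" "a = g j" unfolding S_def by blast
    have "{f p', f (flip p' j)} \<in> insert e E" using edgeH[OF p'(1) j(1)] H(1) by (rule subsetD[rotated])
    then have "{v, flip v a} \<in> insert e E" using g[OF j(1)] p'(2) j(3) by simp
    moreover have "a \<noteq> b" using aS bS by metis
    ultimately have "{v, flip v a} \<in> E" unfolding e_def by (simp add: pair_eq1)
    thus "a \<in> dirs E n v" unfolding dirs_def using g[OF j(1)] j(3) by simp
  qed
  have cyc: "{flip v a, flip (flip v a) b} \<in> E \<and> {flip v b, flip (flip v a) b} \<in> E" if aS: "a \<in> S" for a
  proof -
    obtain j where j: "j < m" "j \<noteq> c" "a = g j" using aS unfolding S_def by blast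
    have ab: "a \<noteq> b" using aS bS by metis
    define s where "s = flip (flip p' j) c"
    have s2: "s = flip (flip p' c) j" unfolding s_def by (rule flip_comm)
    have sQ: "s \<in> QV m" unfolding s_def using flip_QV[OF fl[OF j(1)] pc(2)] .
    have sp: "s \<noteq> p'"
    proof
      assume "s = p'"
      then have "flip s c = flip p' c" by simp
      moreover have "flip s c = flip p' j" unfolding s_def by simp
      ultimately show False using j(2) by simp
    qed
    have fsv: "f s \<noteq> v"
    proof
      assume "f s = v"
      then have "f s = f p'" using p'(2) by simp
      then show False using inj_onD[OF f(2) _ sQ p'(1)] sp by simp
    qed
    have e1: "{flip v a, f s} \<in> H" using edgeH[OF fl[OF j(1)] pc(2)] g[OF j(1)] j(3) s_def by simp
    have e2: "{flip v b, f s} \<in> H" using edgeH[OF fl[OF pc(2)] j(1)] p'(3) s2 by simp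
    have e1Q: "{flip v a, f s} \<in> QE n" using e1 HQ by (rule subsetD[rotated])
    have e2Q: "{flip v b, f s} \<in> QE n" using e2 HQ by (rule subsetD[rotated])
    obtain i where i: "f s = flip (flip v a) i" using QE_pair[OF e1Q] by (elim conjE exE)
    obtain k where k: "f s = flip (flip v b) k" using QE_pair[OF e2Q] by (elim conjE exE)
    have fs: "f s = flip (flip v a) b" using common_nbr[of v a i b k] i k ab fsv by simp
    have n1: "{flip v a, f s} \<noteq> e" unfolding e_def doubleton_eq_iff using fsv ab by simp
    have n2: "{flip v b, f s} \<noteq> e" unfolding e_def doubleton_eq_iff using fsv ab by simp
    have "{flip v a, f s} \<in> E" using e1 H(1) n1 by blast
    moreover have "{flip v b, f s} \<in> E" using e2 H(1) n2 by blast
    ultimately show ?thesis using fs by simp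
  qed
  show ?thesis using Sd cardS bS cyc by blast
qed

lemma dirs_back: "a \<in> dirs E n v \<Longrightarrow> a \<in> dirs E n (flip v a)"
proof -
  assume h: "a \<in> dirs E n v"
  have "{flip v a, flip (flip v a) a} = {v, flip v a}" by auto
  thus ?thesis using h unfolding dirs_def by simp
qed

lemma exists_nondir: "deg E n v < n \<Longrightarrow> \<exists>b<n. b \<notin> dirs E n v"
proof (rule ccontr)
  assume "deg E n v < n" "\<not> (\<exists>b<n. b \<notin> dirs E n v)"
  then have "{..<n} \<subseteq> dirs E n v" by auto
  then have "n \<le> deg E n v" using card_mono[OF finite_dirs, of "{..<n}"] by simp
  thus False using \<open>deg E n v < n\<close> by simp
qed

lemma deg_ge:
  assumes ss: "semi_saturated n m E" and v: "v \<in> QV n" and "deg E n v < n"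
  shows "m - 1 \<le> deg E n v"
proof -
  obtain b where "b < n" "b \<notin> dirs E n v" using exists_nondir assms(3) by blast
  then obtain S where "S \<subseteq> dirs E n v" "card S = m - 1" using four_cycle[OF ss v] by blast
  thus ?thesis using card_mono[OF finite_dirs] by metis
qed

lemma low_nbr:
  assumes ss: "semi_saturated n m E" and v: "v \<in> QV n" and d: "deg E n v = m - 1" "deg E n v < n"
    and a: "a \<in> dirs E n v"
  shows "n - deg E n v + 1 \<le> deg E n (flip v a)"
proof -
  define B where "B = {..<n} - dirs E n v"
  have cB: "card B = n - deg E n v" unfolding B_def using dirs_sub[of E n v]
    by (simp add: card_Diff_subset)
  have Bsub: "B \<subseteq> dirs E n (flip v a)"
  proof
    fix b assume "b \<in> B"
    then have b: "b < n" "b \<notin> dirs E n v" unfolding B_def by auto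
    obtain S where S: "S \<subseteq> dirs E n v" "card S = m - 1" "b \<notin> S" 
       "\<forall>a\<in>S. {flip v a, flip (flip v a) b} \<in> E \<and> {flip v b, flip (flip v a) b} \<in> E"
      using four_cycle[OF ss v b] by (elim exE conjE)
    have "S = dirs E n v" using card_subset_eq[OF finite_dirs S(1)] S(2) d(1) by simp
    then have "{flip v a, flip (flip v a) b} \<in> E" using S(4) a by simp
    then show "b \<in> dirs E n (flip v a)" using b(1) unfolding dirs_def by simp
  qed
  have aB: "a \<notin> B" using a unfolding B_def by simp
  have "insert a B \<subseteq> dirs E n (flip v a)" using Bsub dirs_back[OF a] by simp
  then have "card (insert a B) \<le> deg E n (flip v a)" by (rule card_mono[OF finite_dirs])
  moreover have "card (insert a B) = card B + 1" using aB B_def by simp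
  ultimately show ?thesis using cB by simp
qed

lemma card_ins_le:
  assumes "insert x A \<subseteq> D" "x \<notin> A" "finite D"
  shows "card A + 1 \<le> card D"
proof -
  have "A \<subseteq> D" using assms(1) by simp
  then have "finite A" by (rule finite_subset[OF _ assms(3)])
  then have "card (insert x A) = card A + 1" using assms(2) by simp
  moreover have "card (insert x A) \<le> card D" using card_mono[OF assms(3,1)] .
  ultimately show ?thesis by simp
qed

lemma mid_nbr:
  assumes ss: "semi_saturated n m E" and v: "v \<in> QV n" and d: "deg E n v = m" "deg E n v < n"
    and m2: "m \<ge> 2"
  shows "\<exists>a\<in>dirs E n v. n - m + 2 \<le> 2 * deg E n (flip v a)"
proof -
  have "2 \<le> card (dirs E n v)" using d m2 by simp
  then obtain A where A: "A \<subseteq> dirs E n v" "card A = 2" by (rule obtain_subset_with_card_n)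
  then obtain a1 a2 where aa: "A = {a1, a2}" "a1 \<noteq> a2" unfolding card_2_iff by (elim exE conjE)
  then have a12: "a1 \<in> dirs E n v" "a2 \<in> dirs E n v" "a1 \<noteq> a2" using A(1) by simp_all
  define B where "B = {..<n} - dirs E n v"
  have cB: "card B = n - m" unfolding B_def using dirs_sub[of E n v] d(1)
    by (simp add: card_Diff_subset)
  define A1 where "A1 = B \<inter> dirs E n (flip v a1)"
  define A2 where "A2 = B \<inter> dirs E n (flip v a2)"
  have BA: "B \<subseteq> A1 \<union> A2"
  proof
    fix b assume bB: "b \<in> B"
    then have b: "b < n" "b \<notin> dirs E n v" unfolding B_def by auto
    obtain S where S: "S \<subseteq> dirs E n v" "card S = m - 1" "b \<notin> S"
       "\<forall>a\<in>S. {flip v a, flip (flip v a) b} \<in> E \<and> {flip v b, flip (flip v a) b} \<in> E"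
      using four_cycle[OF ss v b] by (elim exE conjE)
    have "a1 \<in> S \<or> a2 \<in> S"
    proof (rule ccontr)
      assume "\<not> (a1 \<in> S \<or> a2 \<in> S)"
      then have "S \<subseteq> dirs E n v - {a1, a2}" using S(1) by blast
      then have "card S \<le> card (dirs E n v - {a1, a2})" by (simp add: card_mono)
      also have "\<dots> = m - 2" using a12 d(1) by (simp add: card_Diff_subset)
      finally show False using S(2) m2 by simp
    qed
    then show "b \<in> A1 \<union> A2"
    proof
      assume "a1 \<in> S"
      then have "{flip v a1, flip (flip v a1) b} \<in> E" using S(4) by simp
      then show ?thesis using bB b(1) unfolding A1_def dirs_def by simp
    next
      assume "a2 \<in> S"
      then have "{flip v a2, flip (flip v a2) b} \<in> E" using S(4) by simp
      then show ?thesis using bB b(1) unfolding A2_def dirs_def by simp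
    qed
  qed
  have fA1: "finite A1" "finite A2" unfolding A1_def A2_def by simp_all
  have "card B \<le> card (A1 \<union> A2)" using card_mono[OF _ BA] fA1 by simp
  also have "\<dots> \<le> card A1 + card A2" by (rule card_Un_le)
  finally have s: "n - m \<le> card A1 + card A2" using cB by simp
  have "insert a1 A1 \<subseteq> dirs E n (flip v a1)" using dirs_back[OF a12(1)] unfolding A1_def by simp
  moreover have "a1 \<notin> A1" using a12(1) unfolding A1_def B_def by simp
  ultimately have c1: "card A1 + 1 \<le> deg E n (flip v a1)" by (rule card_ins_le[OF _ _ finite_dirs])
  have "insert a2 A2 \<subseteq> dirs E n (flip v a2)" using dirs_back[OF a12(2)] unfolding A2_def by simp
  moreover have "a2 \<notin> A2" using a12(2) unfolding A2_def B_def by simp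
  ultimately have c2: "card A2 + 1 \<le> deg E n (flip v a2)" by (rule card_ins_le[OF _ _ finite_dirs])
  have "n - m + 2 \<le> deg E n (flip v a1) + deg E n (flip v a2)" using s c1 c2 by linarith
  then have "n - m + 2 \<le> 2 * deg E n (flip v a1) \<or> n - m + 2 \<le> 2 * deg E n (flip v a2)" by linarith
  thus ?thesis
  proof
    assume "n - m + 2 \<le> 2 * deg E n (flip v a1)" thus ?thesis by (rule bexI[OF _ a12(1)])
  next
    assume "n - m + 2 \<le> 2 * deg E n (flip v a2)" thus ?thesis by (rule bexI[OF _ a12(2)])
  qed
qed


lemma QE_sub: "QE n \<subseteq> Pow (QV n)"
proof
  fix e assume "e \<in> QE n"
  from QE_elim[OF this] obtain x i where h: "x \<in> QV n" "i < n" "e = {x, flip x i}" by (elim exE conjE)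
  have "flip x i \<in> QV n" using flip_QV[OF h(1,2)] .
  then show "e \<in> Pow (QV n)" using h by simp
qed

lemma finite_QE: "finite (QE n)"
  using finite_subset[OF QE_sub] finite_QV by simp

lemma card_QE_le: "e \<in> QE n \<Longrightarrow> finite e \<and> card e \<le> 2"
proof -
  assume "e \<in> QE n"
  from QE_elim[OF this] obtain x i where h: "e = {x, flip x i}" by (elim exE conjE)
  have "card {x, flip x i} \<le> 2" by (simp add: card_insert_le_m1)
  then show ?thesis using h by simp
qed

lemma sum_deg_le:
  assumes EQ: "E \<subseteq> QE n"
  shows "(\<Sum>v\<in>QV n. deg E n v) \<le> 2 * card E"
proof -
  have fE: "finite E" using finite_subset[OF EQ finite_QE] .
  have "(\<Sum>v\<in>QV n. deg E n v) = card (SIGMA v:QV n. dirs E n v)"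
    using card_SigmaI[OF finite_QV, where B="dirs E n"] by simp
  also have "\<dots> \<le> card (SIGMA e:E. e)"
  proof (rule card_inj_on_le)
    show "inj_on (\<lambda>(v, a). ({v, flip v a}, v)) (SIGMA v:QV n. dirs E n v)"
    proof (rule inj_onI)
      fix x y assume "x \<in> (SIGMA v:QV n. dirs E n v)" "y \<in> (SIGMA v:QV n. dirs E n v)"
        and h0: "(\<lambda>(v, a). ({v, flip v a}, v)) x = (\<lambda>(v, a). ({v, flip v a}, v)) y"
      obtain v a where x: "x = (v, a)" by (cases x)
      obtain v' a' where y: "y = (v', a')" by (cases y)
      have h: "({v, flip v a}, v) = ({v', flip v' a'}, v')" using h0 by (simp only: x y prod.case)
      then have hh: "{v, flip v a} = {v', flip v' a'} \<and> v = v'" by (rule Pair_inject) (rule conjI)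
      then have vv: "v = v'" by (rule conjunct2)
      have "{v, flip v a} = {v, flip v a'}" using conjunct1[OF hh] vv by (simp only:)
      then have "flip v a = flip v a'" by (simp only: pair_eq1)
      then show "x = y" using vv x y by simp
    qed
    show "(\<lambda>(v, a). ({v, flip v a}, v)) ` (SIGMA v:QV n. dirs E n v) \<subseteq> (SIGMA e:E. e)"
      by (auto simp: dirs_def)
    show "finite (SIGMA e:E. e)"
      using fE card_QE_le EQ by (intro finite_SigmaI) auto
  qed
  also have "\<dots> = (\<Sum>e\<in>E. card e)"
    using card_SigmaI[OF fE, where B="\<lambda>e. e"] card_QE_le EQ by auto
  also have "\<dots> \<le> (\<Sum>e\<in>E. 2)"
    by (rule sum_mono) (use card_QE_le EQ in auto)
  finally show ?thesis by simp
qed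

lemma sum_h_le:
  shows "(\<Sum>v\<in>QV n. card {a\<in>dirs E n v. T \<le> deg E n (flip v a)})
          \<le> (\<Sum>u\<in>{u\<in>QV n. T \<le> deg E n u}. deg E n u)"
proof -
  let ?Hi = "{u\<in>QV n. T \<le> deg E n u}"
  have fH: "finite ?Hi" using finite_QV by simp
  have "(\<Sum>v\<in>QV n. card {a\<in>dirs E n v. T \<le> deg E n (flip v a)})
        = card (SIGMA v:QV n. {a\<in>dirs E n v. T \<le> deg E n (flip v a)})"
    using card_SigmaI[OF finite_QV, where B="\<lambda>v. {a\<in>dirs E n v. T \<le> deg E n (flip v a)}"] by simp
  also have "\<dots> \<le> card (SIGMA u:?Hi. dirs E n u)"
  proof (rule card_inj_on_le)
    show "inj_on (\<lambda>(v, a). (flip v a, a)) (SIGMA v:QV n. {a\<in>dirs E n v. T \<le> deg E n (flip v a)})"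
      by (rule inj_onI) auto
    show "(\<lambda>(v, a). (flip v a, a)) ` (SIGMA v:QV n. {a\<in>dirs E n v. T \<le> deg E n (flip v a)})
          \<subseteq> (SIGMA u:?Hi. dirs E n u)"
    proof
      fix p assume "p \<in> (\<lambda>(v, a). (flip v a, a)) ` (SIGMA v:QV n. {a\<in>dirs E n v. T \<le> deg E n (flip v a)})"
      then obtain v a where p: "p = (flip v a, a)" and h: "v \<in> QV n" "a \<in> dirs E n v" "T \<le> deg E n (flip v a)"
        by auto
      have "a < n" using h(2) dirs_sub by blast
      then have "flip v a \<in> QV n" using flip_QV h(1) by simp
      then show "p \<in> (SIGMA u:?Hi. dirs E n u)" using h dirs_back[OF h(2)] p by simp
    qed
    show "finite (SIGMA u:?Hi. dirs E n u)" using fH by (intro finite_SigmaI) auto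
  qed
  also have "\<dots> = (\<Sum>u\<in>?Hi. deg E n u)"
    using card_SigmaI[OF fH, where B="dirs E n"] by simp
  finally show ?thesis .
qed


lemma flip3: "v' = flip (flip v a) a' \<Longrightarrow> flip v a' = flip v' a"
  by (auto simp: set_eq_iff mem_flip)

lemma L1_count:
  assumes ss: "semi_saturated n m E" and m2: "m = 2" and Tn: "T \<le> n" and n2: "2 \<le> n"
  shows "card {v\<in>QV n. deg E n v = 1} \<le> card {u\<in>QV n. T \<le> deg E n u}"
proof -
  let ?L = "{v\<in>QV n. deg E n v = 1}"
  let ?Hi = "{u\<in>QV n. T \<le> deg E n u}"
  define nb where "nb v = flip v (the_elem (dirs E n v))" for v
  have sing: "\<exists>a. dirs E n v = {a} \<and> nb v = flip v a" if "v \<in> ?L" for v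
  proof -
    have "card (dirs E n v) = 1" using that by simp
    then have "card (dirs E n v) = Suc 0" by simp
    then obtain a where "dirs E n v = {a}" using card_1_singleton_iff[THEN iffD1] by blast
    then show ?thesis unfolding nb_def by simp
  qed
  show ?thesis
  proof (rule card_inj_on_le)
    show "finite ?Hi" using finite_QV by simp
    show "nb ` ?L \<subseteq> ?Hi"
    proof
      fix u assume "u \<in> nb ` ?L"
      then obtain v where v: "v \<in> ?L" "u = nb v" by blast
      obtain a where a: "dirs E n v = {a}" "nb v = flip v a" using sing[OF v(1)] by (elim exE conjE)
      have vQ: "v \<in> QV n" and dv: "deg E n v = 1" using v(1) by simp_all
      have ad: "a \<in> dirs E n v" using a(1) by simp
      have "a < n" using ad dirs_sub by blast
      then have uQ: "u \<in> QV n" using flip_QV vQ v(2) a(2) by simp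
      have "n - deg E n v + 1 \<le> deg E n (flip v a)"
        by (rule low_nbr[OF ss vQ]) (use dv m2 n2 ad in simp_all)
      then have "T \<le> deg E n u" using dv Tn v(2) a(2) by simp
      then show "u \<in> ?Hi" using uQ by simp
    qed
    show "inj_on nb ?L"
    proof (rule inj_onI)
      fix v v' assume v: "v \<in> ?L" and v': "v' \<in> ?L" and eq: "nb v = nb v'"
      obtain a where a: "dirs E n v = {a}" "nb v = flip v a" using sing[OF v] by (elim exE conjE)
      obtain a' where a': "dirs E n v' = {a'}" "nb v' = flip v' a'" using sing[OF v'] by (elim exE conjE)
      have vQ: "v \<in> QV n" using v by simp
      have u: "flip v a = flip v' a'" using eq a(2) a'(2) by simp
      show "v = v'"
      proof (cases "a = a'")
        case True then show ?thesis using u by simp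
      next
        case False
        have a'n: "a' < n" using a'(1) dirs_sub[of E n v'] by simp
        have a'd: "a' \<notin> dirs E n v" using a(1) False by simp
        obtain S where S: "S \<subseteq> dirs E n v" "card S = m - 1" "a' \<notin> S"
          "\<forall>x\<in>S. {flip v x, flip (flip v x) a'} \<in> E \<and> {flip v a', flip (flip v x) a'} \<in> E"
          using four_cycle[OF ss vQ a'n a'd] by (elim exE conjE)
        have "S = {a}" using card_subset_eq[OF finite_dirs S(1)] S(2) a(1) m2 by simp
        then have e: "{flip v a', flip (flip v a) a'} \<in> E" using S(4) by simp
        have vv: "v' = flip (flip v a) a'" using u by simp
        have "flip v a' = flip v' a" using flip3[OF vv] .
        then have "{v', flip v' a} \<in> E" using e vv by (simp add: insert_commute)
        moreover have "a < n" using a(1) dirs_sub[of E n v] by simp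
        ultimately have "a \<in> dirs E n v'" unfolding dirs_def by simp
        then show ?thesis using a'(1) False by simp
      qed
    qed
  qed
qed


lemma vertex_bound:
  assumes ss: "semi_saturated n m E" and m2: "m \<ge> 2" and v: "v \<in> QV n"
    and T: "T = (n - m) div 2" and dT: "deg E n v < T"
  shows "m + 1 \<le> deg E n v + card {a\<in>dirs E n v. T \<le> deg E n (flip v a)}
                 + (if m = 2 \<and> deg E n v = 1 then 1 else 0)"
proof -
  let ?h = "card {a\<in>dirs E n v. T \<le> deg E n (flip v a)}"
  have dn: "deg E n v < n" using dT T by linarith
  have dge: "m - 1 \<le> deg E n v" using deg_ge[OF ss v dn] .
  consider "m + 1 \<le> deg E n v" | "deg E n v = m" | "deg E n v = m - 1" using dge by linarith
  then show ?thesis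
  proof cases
    case 1 then show ?thesis by simp
  next
    case 2
    obtain a where a: "a \<in> dirs E n v" "n - m + 2 \<le> 2 * deg E n (flip v a)"
      using mid_nbr[OF ss v 2 dn m2] by blast
    have "T \<le> deg E n (flip v a)" using a(2) T by linarith
    then have "a \<in> {a\<in>dirs E n v. T \<le> deg E n (flip v a)}" using a(1) by simp
    then have "1 \<le> ?h" using card_0_eq[of "{a\<in>dirs E n v. T \<le> deg E n (flip v a)}"] by fastforce
    then show ?thesis using 2 by simp
  next
    case 3
    have "{a\<in>dirs E n v. T \<le> deg E n (flip v a)} = dirs E n v"
    proof (intro set_eqI iffI)
      fix a assume "a \<in> dirs E n v"
      moreover have "n - deg E n v + 1 \<le> deg E n (flip v a)"
        using low_nbr[OF ss v 3 dn] calculation .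
      moreover have "T \<le> n - m" using T by simp
      ultimately show "a \<in> {a\<in>dirs E n v. T \<le> deg E n (flip v a)}" using dn 3 by simp
    qed simp
    then have "?h = m - 1" using 3 by simp
    then show ?thesis using 3 m2 by auto
  qed
qed


lemma main_count:
  assumes ss: "semi_saturated n m E" and m2: "m \<ge> 2"
    and T: "T = (n - m) div 2" and T1: "1 \<le> T"
  shows "(m + 1) * 2 ^ n * T \<le> 2 * card E * (T + m + 2)"
proof -
  let ?V = "QV n"
  let ?Hi = "{u\<in>QV n. T \<le> deg E n u}"
  let ?Lo = "{u\<in>QV n. deg E n u < T}"
  let ?h = "\<lambda>v. card {a\<in>dirs E n v. T \<le> deg E n (flip v a)}"
  let ?i = "\<lambda>v. (if m = 2 \<and> deg E n v = 1 then 1 else 0) :: nat"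
  have EQ: "E \<subseteq> QE n" using ss unfolding semi_saturated_def by (elim conjE)
  have fV: "finite ?V" by (rule finite_QV)
  have fH: "finite ?Hi" and fL: "finite ?Lo" using fV by simp_all
  have disj: "?Hi \<inter> ?Lo = {}" by auto
  have un: "?Hi \<union> ?Lo = ?V" by auto
  define SD where "SD = (\<Sum>v\<in>?V. deg E n v)"
  have SDsplit: "SD = (\<Sum>v\<in>?Hi. deg E n v) + (\<Sum>v\<in>?Lo. deg E n v)"
    unfolding SD_def using sum.union_disjoint[OF fH fL disj, of "deg E n"] un by simp
  have cV: "card ?V = card ?Hi + card ?Lo"
    using card_Un_disjoint[OF fH fL disj] un by simp
  have S1: "(\<Sum>v\<in>?Lo. m + 1) \<le> (\<Sum>v\<in>?Lo. deg E n v + ?h v + ?i v)"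
  proof (rule sum_mono)
    fix v assume "v \<in> ?Lo"
    then show "m + 1 \<le> deg E n v + ?h v + ?i v" using vertex_bound[OF ss m2 _ T] by simp
  qed
  have S2: "(\<Sum>v\<in>?Lo. deg E n v + ?h v + ?i v) = (\<Sum>v\<in>?Lo. deg E n v) + (\<Sum>v\<in>?Lo. ?h v) + (\<Sum>v\<in>?Lo. ?i v)"
    by (simp add: sum.distrib)
  have S3: "(\<Sum>v\<in>?Lo. ?h v) \<le> (\<Sum>v\<in>?V. ?h v)"
    by (rule sum_mono2[OF fV]) auto
  have S4: "(\<Sum>v\<in>?V. ?h v) \<le> (\<Sum>v\<in>?Hi. deg E n v)" by (rule sum_h_le)
  have S5: "(\<Sum>v\<in>?Lo. ?i v) \<le> card ?Hi"
  proof (cases "m = 2")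
    case False then show ?thesis by simp
  next
    case True
    have "(\<Sum>v\<in>?Lo. ?i v) = card {v\<in>?Lo. deg E n v = 1}"
      using True fL by (simp add: sum.If_cases Int_def)
    also have "\<dots> \<le> card {v\<in>QV n. deg E n v = 1}" by (rule card_mono) (use fV in auto)
    also have "\<dots> \<le> card ?Hi"
      by (rule L1_count[OF ss True]) (use T T1 True in simp_all)
    finally show ?thesis .
  qed
  have S6: "(\<Sum>v\<in>?Lo. m + 1) = (m + 1) * card ?Lo" by simp
  have A: "(m + 1) * card ?Lo \<le> SD + card ?Hi" using S1 S2 S3 S4 S5 S6 SDsplit by linarith
  have B: "T * card ?Hi \<le> SD"
  proof -
    have "T * card ?Hi = (\<Sum>v\<in>?Hi. T)" by simp
    also have "\<dots> \<le> (\<Sum>v\<in>?Hi. deg E n v)" by (rule sum_mono) simp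
    finally show ?thesis using SDsplit by simp
  qed
  have C: "SD \<le> 2 * card E" unfolding SD_def by (rule sum_deg_le[OF EQ])
  have D: "(m + 1) * card ?V \<le> SD + (m + 2) * card ?Hi" using A cV by (simp add: algebra_simps)
  have "(m + 1) * card ?V * T \<le> SD * T + (m + 2) * (T * card ?Hi)"
    using mult_right_mono[OF D, of T] by (simp add: algebra_simps)
  also have "\<dots> \<le> SD * T + (m + 2) * SD" using mult_left_mono[OF B, of "m + 2"] by simp
  also have "\<dots> = SD * (T + m + 2)" by (simp add: algebra_simps)
  also have "\<dots> \<le> 2 * card E * (T + m + 2)" by (rule mult_right_mono[OF C]) simp
  finally show ?thesis using card_QV by simp
qed


lemma s_sat_witness: "\<exists>E. semi_saturated n m E \<and> card E = s_sat n m"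
proof -
  have "semi_saturated n m (QE n)" unfolding semi_saturated_def by simp
  then have "\<exists>k. \<exists>E. semi_saturated n m E \<and> card E = k" by blast
  then show ?thesis unfolding s_sat_def by (rule LeastI_ex)
qed

lemma real_step:
  fixes A K P T c e :: real
  assumes h1: "A * P * T \<le> 2 * c * (T + K)" and h2: "A * K \<le> 2 * e * T"
    and P: "P > 0" and T: "T > 0" and K: "K > 0" and e: "e > 0"
  shows "(A / 2 - e) * P \<le> c"
proof (rule ccontr)
  assume "\<not> ?thesis"
  then have c: "2 * c < (A - 2 * e) * P" by (simp add: field_simps)
  have TK: "T + K > 0" using T K by simp
  have "2 * c * (T + K) < (A - 2 * e) * P * (T + K)" using mult_strict_right_mono[OF c TK] .
  also have "(A - 2 * e) * P * (T + K) = P * (A * T + (A * K - 2 * e * T) - 2 * e * K)"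
    by (simp add: algebra_simps)
  also have "\<dots> \<le> P * (A * T)"
  proof (rule mult_left_mono)
    have "0 < 2 * e * K" using e K by simp
    then show "A * T + (A * K - 2 * e * T) - 2 * e * K \<le> A * T" using h2 by linarith
  qed (use P in simp)
  finally show False using h1 by (simp add: algebra_simps)
qed

theorem theorem4:
  fixes m :: nat
  assumes "m \<ge> 2"
  shows "\<forall>\<epsilon>>0. \<forall>\<^sub>F n in sequentially.
           real (s_sat n m) \<ge> ((real m + 1) / 2 - \<epsilon>) * 2 ^ n"
proof (intro allI impI)
  fix e :: real assume e: "e > 0"
  define N0 :: nat where "N0 = nat \<lceil>(real m + 1) * (real m + 2) / (2 * e)\<rceil> + 1"
  have N0: "(real m + 1) * (real m + 2) / (2 * e) \<le> real N0" unfolding N0_def by linarith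
  show "\<forall>\<^sub>F n in sequentially. real (s_sat n m) \<ge> ((real m + 1) / 2 - e) * 2 ^ n"
    unfolding eventually_sequentially
  proof (intro exI allI impI)
    fix n assume n: "m + 2 * N0 \<le> n"
    define T where "T = (n - m) div 2"
    have TN: "N0 \<le> T" unfolding T_def using n by linarith
    have T1: "1 \<le> T" using TN unfolding N0_def by simp
    obtain E where E: "semi_saturated n m E" "card E = s_sat n m" using s_sat_witness by blast
    have mc: "(m + 1) * 2 ^ n * T \<le> 2 * card E * (T + m + 2)"
      by (rule main_count[OF E(1) assms T_def T1])
    then have h1: "(real m + 1) * 2 ^ n * real T \<le> 2 * real (card E) * (real T + (real m + 2))"
      by (metis (mono_tags, lifting) of_nat_le_iff of_nat_mult of_nat_add of_nat_power of_nat_1 of_nat_numeral add.assoc)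
    have "(real m + 1) * (real m + 2) / (2 * e) \<le> real T" using N0 TN by linarith
    then have h2: "(real m + 1) * (real m + 2) \<le> 2 * e * real T"
      using e by (simp add: divide_le_eq mult.commute)
    have "((real m + 1) / 2 - e) * 2 ^ n \<le> real (card E)"
      by (rule real_step[OF h1 h2]) (use e T1 in simp_all)
    then show "((real m + 1) / 2 - e) * 2 ^ n \<le> real (s_sat n m)" using E(2) by simp
  qed
qed

end
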